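(* Let $s\ge2$ and $1=a_1\le a_2\le\dots\le a_s$ with at least one of $a_2,\dots,a_s$ greater than $1$. Define $c_i=1-a_i^{-1}$ for $2\le i\le s$, $M_j=\tfrac12(c_2^j+\dots+c_s^j)$ for $j\ge1$, $$p_0=\prod_{i=2}^s a_i^{-1/2},\qquad p_j=\frac1j\sum_{i=0}^{j-1}M_{j-i}\,p_i\ \ (j\ge1),$$ and $W_i=\sum_{j=0}^i p_j$ for $i\ge0$. Then the sequence $\{W_i\}$ is log-concave: $W_i^2\ge W_{i-1}W_{i+1}$ for all $i\ge1$.
   Context: The $p_j$ are the mixture weights in the expansion $H(u)=\sum_{j\ge0}p_jG_{s+2j}(u)$ of the cdf of $\sum_{i=1}^s a_iY^{(i)}$ ($Y^{(i)}$ independent $\chi^2_1$) in terms of chi-square cdfs $G_{s+2j}$. *)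

theory Defs
  imports Complex_Main
begin

text \<open>Weights a_1,...,a_s given as a function a :: nat => real (indices 1..s).\<close>

definition cc :: "(nat \<Rightarrow> real) \<Rightarrow> nat \<Rightarrow> real" where
  "cc a i = 1 - 1 / a i"

definition MM :: "(nat \<Rightarrow> real) \<Rightarrow> nat \<Rightarrow> nat \<Rightarrow> real" where
  "MM a s j = (1/2) * (\<Sum>i=2..s. (cc a i) ^ j)"

fun plist :: "(nat \<Rightarrow> real) \<Rightarrow> nat \<Rightarrow> nat \<Rightarrow> real list" where
  "plist a s 0 = [\<Prod>i=2..s. a i powr (-1/2)]"
| "plist a s (Suc n) = plist a s n @
     [(1 / real (Suc n)) * (\<Sum>i=0..n. MM a s (Suc n - i) * (plist a s n ! i))]"

definition pp :: "(nat \<Rightarrow> real) \<Rightarrow> nat \<Rightarrow> nat \<Rightarrow> real" where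
  "pp a s j = plist a s j ! j"

definition WW :: "(nat \<Rightarrow> real) \<Rightarrow> nat \<Rightarrow> nat \<Rightarrow> real" where
  "WW a s i = (\<Sum>j=0..i. pp a s j)"

lemma pp_0: "pp a s 0 = (\<Prod>i=2..s. a i powr (-1/2))"
  by (simp add: pp_def)

end

theory Submission
  imports Defs "HOL-Computational_Algebra.Formal_Power_Series"
begin

unbundle fps_syntax


locale wz = fixes w :: "int \<Rightarrow> real"
  assumes nn: "0 \<le> w i" and mono: "w i \<le> w (i+1)"
    and lc1: "p - 1 \<le> q \<Longrightarrow> w (p-1) * w (q+1) \<le> w p * w q"
    and dl: "u \<le> i \<Longrightarrow> w u * (w (i+2) - w (i+1)) \<le> w (u+1) * (w (i+1) - w i)"
begin

definition S :: "nat \<Rightarrow> int \<Rightarrow> real" where "S n j = (\<Sum>k\<le>n. w (j - int k))"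

lemma S0: "S 0 j = w j" by (simp add: S_def)
lemma S_Suc: "S (Suc n) j = S n j + w (j - int n - 1)"
  by (simp add: S_def algebra_simps)
lemma S_shift: "S n (j+1) = S n j + w (j+1) - w (j - int n)"
  by (induction n) (simp_all add: S0 S_Suc algebra_simps)

definition Qf :: "(int \<Rightarrow> real) \<Rightarrow> (int \<Rightarrow> real) \<Rightarrow> int \<Rightarrow> real" where
  "Qf x y j = 2 * x j * y j - x (j-1) * y (j+1) - x (j+1) * y (j-1)"

lemma Qf_sym: "Qf x y j = Qf y x j" by (simp add: Qf_def algebra_simps)

lemma sumdelta:
  assumes "u \<le> p - 1" "p - 1 \<le> i"
  shows "w u * (w (i+1) - w p) \<le> w (u+1) * (w i - w (p-1))"
  using assms(2)
proof (induction i rule: int_ge_induct)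
  case base then show ?case by simp
next
  case (step i)
  have "w u * (w (i+2) - w (i+1)) \<le> w (u+1) * (w (i+1) - w i)"
    using dl[of u i] assms(1) step(1) by simp
  with step(2) show ?case by (simp add: algebra_simps add.assoc)
qed

lemma E_nonneg:
  assumes "u \<le> j - 1" "p \<le> j"
  shows "0 \<le> w p * w u - w (p-1) * w (u+1) + w j * w (u+1) - w (j+1) * w u"
proof (cases "p - 1 \<le> u")
  case True
  have "w (p-1) * w (u+1) \<le> w p * w u" using lc1[OF True] .
  moreover have "w u * w (j+1) \<le> w (u+1) * w j" using lc1[of "u+1" j] assms by simp
  ultimately show ?thesis by (simp add: algebra_simps)
next
  case False
  have "w u * (w (j+1) - w p) \<le> w (u+1) * (w j - w (p-1))"
    using sumdelta[of u p j] False assms by simp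
  then show ?thesis by (simp add: algebra_simps)
qed

lemma AB_aux:
  assumes "p \<le> j"
  shows "w p * w j - w (p-1) * w (j+1) + (w j * w (j - int n) - w (j+1) * w (j - int n - 1))
     \<le> (w p * S n j - w (p-1) * S n (j+1)) + (w j * S n j - w (j+1) * S n (j-1))"
proof (induction n)
  case 0 then show ?case by (simp add: S0)
next
  case (Suc n)
  have E: "0 \<le> w p * w (j - int n - 1) - w (p-1) * w (j - int n - 1 + 1)
      + w j * w (j - int n - 1 + 1) - w (j+1) * w (j - int n - 1)"
    using E_nonneg[of "j - int n - 1" j p] assms by simp
  have e1: "j + 1 - int n - 1 = j - int n" by simp
  have e2: "j - 1 - int n - 1 = j - int n - 1 - 1" by simp
  have e3: "j - int n - 1 + 1 = j - int n" by simp
  show ?case using Suc E unfolding S_Suc e1 e2 e3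
    by (simp add: algebra_simps)
qed

lemma AB:
  assumes "p \<le> j"
  shows "0 \<le> (w p * S n j - w (p-1) * S n (j+1)) + (w j * S n j - w (j+1) * S n (j-1))"
proof -
  have "w (p-1) * w (j+1) \<le> w p * w j" using lc1[of p j] assms by simp
  moreover have "w (j - int n - 1) * w (j+1) \<le> w (j - int n) * w j"
    using lc1[of "j - int n" j] by simp
  ultimately show ?thesis using AB_aux[OF assms, of n] by (simp add: algebra_simps)
qed


lemma CD:
  assumes "q + 1 \<le> j" "j - int n \<le> q"
  shows "0 \<le> (w (q+1) * S n j - w q * S n (j+1)) + (w q * S n j - w (q+1) * S n (j-1))"
proof -
  have s1: "S n j = S n (j-1) + w j - w (j - 1 - int n)" using S_shift[of n "j-1"] by simp
  have "w q * w (j+1) \<le> w (q+1) * w j" using lc1[of "q+1" j] assms by simp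
  moreover have "w (j - int n - 1) * w (q+1) \<le> w (j - int n) * w q"
    using lc1[of "j - int n" q] assms by simp
  moreover have "j - 1 - int n = j - int n - 1" by simp
  ultimately show ?thesis unfolding S_shift s1 by (simp add: algebra_simps)
qed

lemma QSS_aux:
  assumes "m \<le> n"
  shows "(w (j - int m) * S n j - w (j - int m - 1) * S n (j+1)) + (w j * S n j - w (j+1) * S n (j-1))
     \<le> Qf (S m) (S n) j"
  using assms
proof (induction m)
  case 0 then show ?case by (simp add: Qf_def S0)
next
  case (Suc m)
  have cd: "0 \<le> (w (j - int m - 1 + 1) * S n j - w (j - int m - 1) * S n (j+1)) + (w (j - int m - 1) * S n j - w (j - int m - 1 + 1) * S n (j-1))"
    using CD[of "j - int m - 1" j n] Suc(2) by simp
  have e1: "j + 1 - int m - 1 = j - int m" by simp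
  have e2: "j - 1 - int m - 1 = j - int m - 1 - 1" by simp
  have e3: "j - int m - 1 + 1 = j - int m" by simp
  show ?case using Suc cd unfolding Qf_def S_Suc e1 e2 e3 of_nat_Suc
    by (simp add: algebra_simps)
qed

lemma QSS: "0 \<le> Qf (S m) (S n) j"
proof (cases "m \<le> n")
  case True
  show ?thesis using QSS_aux[OF True, of j] AB[of "j - int m" j n] by simp
next
  case False
  then have "n \<le> m" by simp
  then show ?thesis using QSS_aux[of n m j] AB[of "j - int n" j m] Qf_sym by simp
qed

definition CV :: "nat \<Rightarrow> (nat \<Rightarrow> real) \<Rightarrow> int \<Rightarrow> real" where
  "CV N b J = (\<Sum>k\<le>N. b k * w (J - int k))"

lemma Qf_lin1: "Qf (\<lambda>J. x J + c * z J) y j = Qf x y j + c * Qf z y j"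
  by (simp add: Qf_def algebra_simps)

lemma CV_ind:
  assumes "K \<le> N + 1" "\<And>k. 0 \<le> b k" "\<And>k. b (Suc k) \<le> b k" "\<And>k. K \<le> k \<Longrightarrow> b k = 0"
  shows "(\<forall>n. 0 \<le> Qf (CV N b) (S n) j) \<and> 0 \<le> Qf (CV N b) (CV N b) j"
  using assms
proof (induction K arbitrary: b)
  case 0
  then have "\<And>J. CV N b J = 0" by (simp add: CV_def)
  then show ?case by (simp add: Qf_def)
next
  case (Suc K)
  define c where "c = b K"
  define b' where "b' k = (if k < K then b k - c else 0)" for k
  have anti: "b K \<le> b k" if "k \<le> K" for k
    using that
  proof (induction "K - k" arbitrary: k)
    case 0 then show ?case by simp
  next
    case (Suc d)
    then have "b K \<le> b (Suc k)" by simp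
    also have "\<dots> \<le> b k" using Suc.prems by (simp add: \<open>\<And>k. b (Suc k) \<le> b k\<close>)
    finally show ?case .
  qed
  have b'nn: "0 \<le> b' k" for k using anti[of k] by (simp add: b'_def c_def)
  have b'mono: "b' (Suc k) \<le> b' k" for k
    using Suc.prems(3)[of k] anti[of k] by (auto simp: b'_def c_def)
  have b'sup: "b' k = 0" if "K \<le> k" for k using that by (simp add: b'_def)
  have IH: "(\<forall>n. 0 \<le> Qf (CV N b') (S n) j) \<and> 0 \<le> Qf (CV N b') (CV N b') j"
    using Suc.IH[of b'] Suc.prems(1) b'nn b'mono b'sup by simp
  have c0: "0 \<le> c" using Suc.prems(2) by (simp add: c_def)
  have eqb: "b k = b' k + (if k \<le> K then c else 0)" for k
    using Suc.prems(4)[of k] by (auto simp: b'_def c_def)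
  have eq: "CV N b J = CV N b' J + c * S K J" for J
  proof -
    have "CV N b J = CV N b' J + (\<Sum>k\<le>N. (if k \<le> K then c else 0) * w (J - int k))"
      unfolding CV_def eqb by (simp add: algebra_simps sum.distrib)
    also have "(\<Sum>k\<le>N. (if k \<le> K then c else 0) * w (J - int k)) = (\<Sum>k\<in>{..N} \<inter> {..K}. c * w (J - int k))"
    proof -
      have "(\<Sum>k\<le>N. (if k \<le> K then c else 0) * w (J - int k)) = (\<Sum>k\<in>{..N}. if k \<in> {..K} then c * w (J - int k) else 0)"
        by (rule sum.cong) auto
      also have "\<dots> = (\<Sum>k\<in>{..N} \<inter> {..K}. c * w (J - int k))"
        by (rule sum.inter_restrict[symmetric]) simp
      finally show ?thesis .
    qed
    also have "{..N} \<inter> {..K} = {..K}" using Suc.prems(1) by auto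
    finally show ?thesis by (simp add: S_def sum_distrib_left)
  qed
  have fe: "CV N b = (\<lambda>J. CV N b' J + c * S K J)" using eq by auto
  have A1: "0 \<le> Qf (CV N b) (S n) j" for n
    unfolding fe Qf_lin1 using IH QSS[of K n j] c0 by simp
  have "Qf (CV N b) (CV N b) j = Qf (CV N b') (CV N b') j + 2 * c * Qf (CV N b') (S K) j + c * c * Qf (S K) (S K) j"
    unfolding fe by (simp add: Qf_def algebra_simps)
  moreover have "0 \<le> 2 * c * Qf (CV N b') (S K) j" using IH c0 by simp
  moreover have "0 \<le> c * c * Qf (S K) (S K) j" using QSS c0 by simp
  ultimately show ?case using A1 IH by simp
qed

end



lemma ratio_lemma:
  fixes w :: "nat \<Rightarrow> real"
  assumes pos: "\<And>i. 0 < w i" and lc: "\<And>i. w i * w (i+2) \<le> (w (Suc i))^2"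
    and "i \<le> k"
  shows "w (k+1) * w i \<le> w (i+1) * w k"
  using assms(3)
proof (induction k rule: dec_induct)
  case base then show ?case by (simp add: mult.commute)
next
  case (step k)
  have h: "w (k+2) * w k \<le> w (k+1) * w (k+1)" using lc[of k] by (simp add: power2_eq_square mult.commute)
  have "w (k+2) * w i * w k = (w (k+2) * w k) * w i" by (simp add: algebra_simps)
  also have "\<dots> \<le> (w (k+1) * w (k+1)) * w i" using h pos[of i] by (intro mult_right_mono) auto
  also have "\<dots> = (w (k+1) * w i) * w (k+1)" by (simp add: algebra_simps)
  also have "\<dots> \<le> (w (i+1) * w k) * w (k+1)" using step(3) pos[of "k+1"] by (intro mult_right_mono) auto
  finally have "(w (k+2) * w i) * w k \<le> (w (i+1) * w (k+1)) * w k" by (simp add: algebra_simps)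
  then have "w (k+2) * w i \<le> w (i+1) * w (k+1)" using pos[of k] by (simp add: mult_le_cancel_right)
  then show ?case by (simp add: add.assoc)
qed

lemma dl_nat:
  fixes w :: "nat \<Rightarrow> real"
  assumes pos: "\<And>i. 0 < w i" and mono: "\<And>i. w i \<le> w (Suc i)"
    and lc: "\<And>i. w i * w (i+2) \<le> (w (Suc i))^2" and "u \<le> i"
  shows "w u * (w (i+2) - w (i+1)) \<le> w (u+1) * (w (i+1) - w i)"
proof -
  have h1: "w (i+2) * w i \<le> w (i+1) * w (i+1)" using lc[of i] by (simp add: power2_eq_square mult.commute)
  have h2: "w (i+1) * w u \<le> w (u+1) * w i" using ratio_lemma[OF pos lc assms(4)] by simp
  have d: "0 \<le> w (i+1) - w i" using mono[of i] by simp
  have "(w u * (w (i+2) - w (i+1))) * w i = w u * (w (i+2) * w i - w (i+1) * w i)" by (simp add: algebra_simps)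
  also have "\<dots> \<le> w u * (w (i+1) * w (i+1) - w (i+1) * w i)"
    using h1 pos[of u] by (intro mult_left_mono) auto
  also have "\<dots> = (w (i+1) * w u) * (w (i+1) - w i)" by (simp add: algebra_simps)
  also have "\<dots> \<le> (w (u+1) * w i) * (w (i+1) - w i)" using h2 d by (intro mult_right_mono) auto
  also have "\<dots> = (w (u+1) * (w (i+1) - w i)) * w i" by (simp add: algebra_simps)
  finally show ?thesis using pos[of i] by (simp add: mult_le_cancel_right)
qed

definition ext :: "(nat \<Rightarrow> real) \<Rightarrow> int \<Rightarrow> real" where
  "ext w i = (if i < 0 then 0 else w (nat i))"

lemma ext_wz:
  fixes w :: "nat \<Rightarrow> real"
  assumes pos: "\<And>i. 0 < w i" and mono: "\<And>i. w i \<le> w (Suc i)"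
    and lc: "\<And>i. w i * w (i+2) \<le> (w (Suc i))^2"
  shows "wz (ext w)"
proof
  fix i show "0 \<le> ext w i" using pos[of "nat i"] by (simp add: ext_def less_imp_le)
next
  fix i show "ext w i \<le> ext w (i+1)"
    using pos[of "nat i"] mono[of "nat i"] pos[of 0]
    by (auto simp: ext_def less_imp_le nat_add_distrib)
next
  fix p q :: int assume a: "p - 1 \<le> q"
  show "ext w (p-1) * ext w (q+1) \<le> ext w p * ext w q"
  proof (cases "p - 1 < 0")
    case True then show ?thesis using pos by (simp add: ext_def less_imp_le)
  next
    case False
    define i where "i = nat (p-1)"
    define k where "k = nat q"
    have ik: "i \<le> k" using a False by (simp add: i_def k_def)
    have pi: "nat p = i + 1" "nat (q+1) = k + 1" using a False by (simp_all add: i_def k_def)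
    have "w (k+1) * w i \<le> w (i+1) * w k" using ratio_lemma[OF pos lc ik] .
    then show ?thesis using False a pi by (simp add: ext_def i_def[symmetric] k_def[symmetric] mult.commute)
  qed
next
  fix u i :: int assume a: "u \<le> i"
  show "ext w u * (ext w (i+2) - ext w (i+1)) \<le> ext w (u+1) * (ext w (i+1) - ext w i)"
  proof (cases "u < 0")
    case True
    have "0 \<le> ext w (u+1)" "ext w i \<le> ext w (i+1)"
      using pos[of "nat (u+1)"] pos[of "nat i"] mono[of "nat i"] pos[of 0]
      by (auto simp: ext_def less_imp_le nat_add_distrib)
    then show ?thesis using True by (simp add: ext_def)
  next
    case False
    have e: "nat (i+2) = nat i + 2" "nat (i+1) = nat i + 1" "nat (u+1) = nat u + 1"
      using a False by simp_all
    show ?thesis using dl_nat[OF pos mono lc, of "nat u" "nat i"] a False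
      by (simp add: ext_def e)
  qed
qed




lemma conv_good:
  fixes w b :: "nat \<Rightarrow> real"
  assumes pos: "\<And>i. 0 < w i" and mono: "\<And>i. w i \<le> w (Suc i)"
    and lc: "\<And>i. w i * w (i+2) \<le> (w (Suc i))^2"
    and bnn: "\<And>k. 0 \<le> b k" and bmono: "\<And>k. b (Suc k) \<le> b k" and b0: "0 < b 0"
    and v: "\<And>n. v n = (\<Sum>k=0..n. b k * w (n - k))"
  shows "0 < v i" "v i \<le> v (Suc i)" "v i * v (i+2) \<le> (v (Suc i))^2"
proof -
  show "0 < v i"
  proof -
    have "b 0 * w (i - 0) \<le> (\<Sum>k=0..i. b k * w (i - k))"
      by (rule member_le_sum) (use bnn pos in \<open>auto intro: mult_nonneg_nonneg less_imp_le\<close>)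
    moreover have "0 < b 0 * w (i - 0)" using b0 pos by simp
    ultimately show ?thesis using v by simp
  qed
  show "v i \<le> v (Suc i)"
  proof -
    have "(\<Sum>k=0..i. b k * w (i - k)) \<le> (\<Sum>k=0..i. b k * w (Suc i - k))"
      by (rule sum_mono) (use bnn mono in \<open>auto intro!: mult_left_mono simp: Suc_diff_le\<close>)
    also have "\<dots> \<le> (\<Sum>k=0..Suc i. b k * w (Suc i - k))"
      by (rule sum_mono2) (use bnn pos in \<open>auto intro: mult_nonneg_nonneg less_imp_le\<close>)
    finally show ?thesis using v by simp
  qed
  show "v i * v (i+2) \<le> (v (Suc i))^2"
  proof -
    interpret wz "ext w" using ext_wz[OF pos mono lc] .
    define N where "N = i + 2"
    define bt where "bt k = (if k \<le> N then b k else 0)" for k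
    have "(\<forall>n. 0 \<le> Qf (CV N bt) (S n) (int (Suc i))) \<and> 0 \<le> Qf (CV N bt) (CV N bt) (int (Suc i))"
      by (rule CV_ind[of "N+1"]) (use bnn bmono in \<open>auto simp: bt_def\<close>)
    then have q: "0 \<le> Qf (CV N bt) (CV N bt) (int (Suc i))" by simp
    have cv: "CV N bt (int n) = v n" if "n \<le> N" for n
    proof -
      have "CV N bt (int n) = (\<Sum>k\<in>{..N}. if k \<in> {..n} then b k * w (n - k) else 0)"
        unfolding CV_def using that by (intro sum.cong) (auto simp: bt_def ext_def of_nat_diff[symmetric] simp del: of_nat_diff)
      also have "\<dots> = (\<Sum>k\<in>{..N} \<inter> {..n}. b k * w (n - k))"
        by (rule sum.inter_restrict[symmetric]) simp
      also have "{..N} \<inter> {..n} = {0..n}" using that by auto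
      finally show ?thesis using v by simp
    qed
    have e: "int (Suc i) - 1 = int i" "int (Suc i) + 1 = int (i+2)" by simp_all
    have "0 \<le> 2 * v (Suc i) * v (Suc i) - v i * v (i+2) - v (i+2) * v i"
    proof -
      have c1: "CV N bt (int i) = v i" "CV N bt (int (Suc i)) = v (Suc i)" "CV N bt (int (i+2)) = v (i+2)"
        using cv[of i] cv[of "Suc i"] cv[of "i+2"] unfolding N_def by (simp_all del: of_nat_Suc of_nat_add)
      show ?thesis using q unfolding Qf_def e c1 by simp
    qed
    then show ?thesis by (simp add: power2_eq_square algebra_simps)
  qed
qed





fun bseq :: "real \<Rightarrow> nat \<Rightarrow> real" where
  "bseq c 0 = 1"
| "bseq c (Suc n) = c * (2 * real n + 1) / (2 * real n + 2) * bseq c n"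

definition Bf :: "real \<Rightarrow> real fps" where "Bf c = Abs_fps (bseq c)"
definition Af :: "real \<Rightarrow> real fps" where "Af c = Abs_fps (\<lambda>k. if k = 0 then 0 else c^k / 2)"
definition good :: "real fps \<Rightarrow> real fps \<Rightarrow> bool" where
  "good A F \<longleftrightarrow> fps_X * fps_deriv F = A * F"

lemma good_B: "good (Af c) (Bf c)"
proof -
  define L where "L = 1 - fps_const c * fps_X"
  have h1: "L * Af c = fps_const (c/2) * fps_X"
  proof -
    have "L * Af c = Af c - fps_const c * (fps_X * Af c)" by (simp add: L_def algebra_simps)
    also have "\<dots> = fps_const (c/2) * fps_X"
    proof (rule fps_ext)
      fix n show "(Af c - fps_const c * (fps_X * Af c)) $ n = (fps_const (c/2) * fps_X) $ n"
      proof (cases n)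
        case 0 then show ?thesis by (simp add: Af_def)
      next
        case (Suc m) then show ?thesis by (cases m) (auto simp: Af_def)
      qed
    qed
    finally show ?thesis .
  qed
  have h2: "L * (fps_X * fps_deriv (Bf c)) = fps_const (c/2) * fps_X * Bf c"
  proof -
    have "L * (fps_X * fps_deriv (Bf c)) = fps_X * fps_deriv (Bf c) - fps_const c * (fps_X * (fps_X * fps_deriv (Bf c)))"
      by (simp add: L_def algebra_simps)
    also have "\<dots> = fps_const (c/2) * (fps_X * Bf c)"
    proof (rule fps_ext)
      fix n show "(fps_X * fps_deriv (Bf c) - fps_const c * (fps_X * (fps_X * fps_deriv (Bf c)))) $ n = (fps_const (c/2) * (fps_X * Bf c)) $ n"
      proof (cases n)
        case 0 then show ?thesis by simp
      next
        case (Suc m)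
        have "real (Suc m) * bseq c (Suc m) - c * (real m * bseq c m) = c / 2 * bseq c m"
          by (simp add: field_simps)
        then show ?thesis using Suc by (cases m) (auto simp: Bf_def)
      qed
    qed
    finally show ?thesis by (simp add: mult.assoc)
  qed
  have "L * (fps_X * fps_deriv (Bf c)) = L * (Af c * Bf c)"
    using h1 h2 by (metis mult.assoc)
  moreover have "L \<noteq> 0"
  proof
    assume "L = 0" then have "L $ 0 = 0" by simp
    then show False by (simp add: L_def)
  qed
  ultimately show ?thesis unfolding good_def by simp
qed

lemma good_mult: "good A F \<Longrightarrow> good B G \<Longrightarrow> good (A + B) (F * G)"
  unfolding good_def by (simp add: algebra_simps)

lemma good_prod:
  assumes "finite I"
  shows "good (\<Sum>i\<in>I. Af (c i)) (\<Prod>i\<in>I. Bf (c i))"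
  using assms
proof (induction I rule: finite_induct)
  case empty then show ?case by (simp add: good_def)
next
  case (insert x I)
  then show ?case using good_mult[OF good_B[of "c x"] insert(3)] by simp
qed

lemma prod_nth0: "finite I \<Longrightarrow> (\<Prod>i\<in>I. Bf (c i)) $ 0 = 1"
  by (induction I rule: finite_induct) (simp_all add: Bf_def)

lemma bseq_nn: "0 \<le> c \<Longrightarrow> 0 \<le> bseq c n"
  by (induction n) auto

lemma bseq_mono: "0 \<le> c \<Longrightarrow> c \<le> 1 \<Longrightarrow> bseq c (Suc n) \<le> bseq c n"
proof -
  assume c: "0 \<le> c" "c \<le> 1"
  have f: "c * (2 * real n + 1) / (2 * real n + 2) \<le> 1" using c by (simp add: field_simps) (smt (verit) mult_left_le_one_le of_nat_0_le_iff)
  show ?thesis using mult_right_mono[OF f bseq_nn[OF c(1), of n]] by simp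
qed





definition ONES :: "real fps" where "ONES = Abs_fps (\<lambda>_. 1)"

definition PG :: "real fps \<Rightarrow> bool" where
  "PG F \<longleftrightarrow> (\<forall>i. 0 < F $ i \<and> F $ i \<le> F $ Suc i \<and> F $ i * F $ (i+2) \<le> (F $ Suc i)^2)"

lemma PG_step:
  assumes "PG F" "0 \<le> c" "c \<le> 1"
  shows "PG (F * Bf c)"
proof -
  have pos: "\<And>i. 0 < F $ i" and mono: "\<And>i. F $ i \<le> F $ Suc i"
    and lc: "\<And>i. F $ i * F $ (i+2) \<le> (F $ Suc i)^2" using assms(1) by (auto simp: PG_def)
  have v: "\<And>n. (F * Bf c) $ n = (\<Sum>k=0..n. bseq c k * F $ (n - k))"
    by (subst mult.commute) (simp add: fps_mult_nth Bf_def)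
  note cg = conv_good[where w = "\<lambda>i. F $ i" and b = "bseq c" and v = "\<lambda>n. (F * Bf c) $ n",
     OF pos mono lc bseq_nn[OF assms(2)] bseq_mono[OF assms(2,3)] _ v]
  show ?thesis unfolding PG_def using cg by simp
qed

lemma PG_prod:
  assumes "finite I" "\<forall>i\<in>I. 0 \<le> c i \<and> c i \<le> 1"
  shows "PG (ONES * (\<Prod>i\<in>I. Bf (c i)))"
  using assms
proof (induction I rule: finite_induct)
  case empty then show ?case by (simp add: PG_def ONES_def)
next
  case (insert x I)
  have "ONES * (\<Prod>i\<in>insert x I. Bf (c i)) = (ONES * (\<Prod>i\<in>I. Bf (c i))) * Bf (c x)"
    using insert(1,2) by (simp add: prod.insert mult.assoc mult.commute)
  moreover have "PG ((ONES * (\<Prod>i\<in>I. Bf (c i))) * Bf (c x))"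
    using PG_step[of "ONES * (\<Prod>i\<in>I. Bf (c i))" "c x"] insert by simp
  ultimately show ?case by (simp only:)
qed

lemma plist_len: "length (plist a s n) = Suc n"
  by (induction n) auto

lemma plist_nth: "i \<le> n \<Longrightarrow> plist a s n ! i = pp a s i"
proof (induction n)
  case 0 then show ?case by (simp add: pp_def)
next
  case (Suc n)
  show ?case
  proof (cases "i \<le> n")
    case True
    then have "plist a s (Suc n) ! i = plist a s n ! i" by (simp add: nth_append plist_len)
    then show ?thesis using Suc True by simp
  next
    case False then have "i = Suc n" using Suc by simp
    then show ?thesis by (simp add: pp_def)
  qed
qed

lemma pp_Suc: "pp a s (Suc m) = (1 / real (Suc m)) * (\<Sum>i=0..m. MM a s (Suc m - i) * pp a s i)"
proof -
  have "pp a s (Suc m) = (1 / real (Suc m)) * (\<Sum>i=0..m. MM a s (Suc m - i) * (plist a s m ! i))"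
    by (simp add: pp_def nth_append plist_len)
  also have "\<dots> = (1 / real (Suc m)) * (\<Sum>i=0..m. MM a s (Suc m - i) * pp a s i)"
    by (simp add: plist_nth)
  finally show ?thesis .
qed

theorem lemma3:
  fixes a :: "nat \<Rightarrow> real" and s :: nat
  assumes "s \<ge> 2"
    and "a 1 = 1"
    and "\<And>i. 1 \<le> i \<Longrightarrow> i < s \<Longrightarrow> a i \<le> a (Suc i)"
    and "\<exists>i\<in>{2..s}. a i > 1"
  shows "\<forall>i\<ge>1. (WW a s i)^2 \<ge> WW a s (i - 1) * WW a s (i + 1)"
proof -
  have a1: "1 \<le> a i" if "1 \<le> i" "i \<le> s" for i
    using that
  proof (induction i)
    case 0 then show ?case by simp
  next
    case (Suc i)
    show ?case
    proof (cases "i = 0")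
      case True then show ?thesis using assms(2) by simp
    next
      case False
      then have "1 \<le> a i" using Suc by simp
      also have "a i \<le> a (Suc i)" using assms(3)[of i] False Suc.prems by simp
      finally show ?thesis .
    qed
  qed
  define c where "c i = cc a i" for i
  have crange: "\<forall>i\<in>{2..s}. 0 \<le> c i \<and> c i \<le> 1"
  proof
    fix i assume "i \<in> {2..s}"
    then have "1 \<le> a i" using a1 by simp
    then show "0 \<le> c i \<and> c i \<le> 1" by (simp add: c_def cc_def field_simps)
  qed
  define Q where "Q = (\<Prod>i\<in>{2..s}. Bf (c i))"
  define A where "A = (\<Sum>i\<in>{2..s}. Af (c i))"
  have gQ: "fps_X * fps_deriv Q = A * Q" using good_prod[of "{2..s}" c] by (simp add: good_def Q_def A_def)
  have An: "A $ k = MM a s k" if "k \<noteq> 0" for k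
    using that by (simp add: A_def fps_sum_nth Af_def MM_def c_def sum_divide_distrib)
  have Q0: "Q $ 0 = 1" unfolding Q_def by (rule prod_nth0) simp
  have rec: "real (Suc m) * Q $ Suc m = (\<Sum>i=0..m. MM a s (Suc m - i) * Q $ i)" for m
  proof -
    have "real (Suc m) * Q $ Suc m = (fps_X * fps_deriv Q) $ Suc m" by simp
    also have "\<dots> = (Q * A) $ Suc m" using gQ by (simp add: mult.commute)
    also have "\<dots> = (\<Sum>i=0..Suc m. Q $ i * A $ (Suc m - i))" by (rule fps_mult_nth)
    also have "\<dots> = (\<Sum>i=0..m. Q $ i * A $ (Suc m - i))"
      by (simp add: A_def fps_sum_nth Af_def)
    also have "\<dots> = (\<Sum>i=0..m. MM a s (Suc m - i) * Q $ i)"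
      by (rule sum.cong) (auto simp: An mult.commute)
    finally show ?thesis .
  qed
  have ppQ: "pp a s j = pp a s 0 * Q $ j" for j
  proof (induction j rule: less_induct)
    case (less j)
    show ?case
    proof (cases j)
      case 0 then show ?thesis by (simp add: Q0)
    next
      case (Suc m)
      have "pp a s (Suc m) = (1 / real (Suc m)) * (\<Sum>i=0..m. MM a s (Suc m - i) * (pp a s 0 * Q $ i))"
      proof -
        have h: "\<And>i. i \<in> {0..m} \<Longrightarrow> MM a s (Suc m - i) * pp a s i = MM a s (Suc m - i) * (pp a s 0 * Q $ i)"
        proof -
          fix i assume "i \<in> {0..m}"
          then have "i < j" using Suc by simp
          then show "MM a s (Suc m - i) * pp a s i = MM a s (Suc m - i) * (pp a s 0 * Q $ i)"
            using less.IH[of i] by (simp only:)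
        qed
        have "(\<Sum>i=0..m. MM a s (Suc m - i) * pp a s i) = (\<Sum>i=0..m. MM a s (Suc m - i) * (pp a s 0 * Q $ i))"
          by (rule sum.cong[OF refl]) (rule h)
        then show ?thesis unfolding pp_Suc by (simp only:)
      qed
      also have "\<dots> = pp a s 0 * ((1 / real (Suc m)) * (\<Sum>i=0..m. MM a s (Suc m - i) * Q $ i))"
        by (simp add: sum_distrib_left algebra_simps)
      also have "\<dots> = pp a s 0 * Q $ Suc m" using rec[of m] by (simp add: field_simps)
      finally show ?thesis using Suc by simp
    qed
  qed
  define F where "F = ONES * Q"
  have WWF: "WW a s i = pp a s 0 * F $ i" for i
  proof -
    have "F $ i = (\<Sum>j=0..i. Q $ j)" unfolding F_def
      by (subst mult.commute) (simp add: fps_mult_nth ONES_def)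
    moreover have "WW a s i = (\<Sum>j=0..i. pp a s 0 * Q $ j)"
      unfolding WW_def by (rule sum.cong) (rule refl, rule ppQ)
    ultimately show ?thesis by (simp add: sum_distrib_left)
  qed
  have PF: "PG F" unfolding F_def Q_def by (rule PG_prod) (use crange in auto)
  show ?thesis
  proof (intro allI impI)
    fix i :: nat assume "1 \<le> i"
    then obtain k where k: "i = Suc k" by (cases i) auto
    have "F $ k * F $ (k+2) \<le> (F $ Suc k)^2" using PF by (simp add: PG_def)
    then have "(pp a s 0)^2 * (F $ k * F $ (k+2)) \<le> (pp a s 0)^2 * (F $ Suc k)^2"
      by (rule mult_left_mono) simp
    then show "WW a s (i - 1) * WW a s (i + 1) \<le> (WW a s i)^2"
      unfolding WWF k by (simp add: power2_eq_square algebra_simps)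
  qed
qed


end
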